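(* Let $C(\cdot,t)$, $t\in(-\infty,+\infty)$, be a solution by closed curves of the flow $$\frac{\partial C(p,t)}{\partial t}=\Big(\lambda+\int_0^{\xi(p)}\varphi\,d\xi\Big)C+\frac{\varphi}{2}C_\xi$$ ($\lambda$ a real constant) whose centro-affine curvature $\varphi$ is uniformly bounded on $S^1\times(-\infty,+\infty)$. Then for every integer $n\ge0$ there exists a constant $C_n$ such that $|\varphi_{\xi^n}(\xi,t)|\le C_n$ on $S^1\times(-\infty,+\infty)$.
   Context: For $u,v\in\mathbb{R}^2$, $[u,v]$ denotes the determinant of the matrix with columns $u,v$. Each curve $C(\cdot,t):S^1\to\mathbb{R}^2$ is smooth, closed, with $[C,C_p]\neq0$, $[C_p,C_{pp}]\neq0$ (then $[C_p,C_{pp}]/[C,C_p]>0$). The centro-affine metric is $g=\sqrt{[C_p,C_{pp}]/[C,C_p]}$, centro-affine arc-length $\xi(p)=\int_{p_0}^p g\,dp$ (so $\partial_\xi=g^{-1}\partial_p$), centro-affine curvature $\varphi=[C_{\xi\xi},C]/[C_\xi,C]$, and $\varphi_{\xi^n}=\partial^n\varphi/\partial\xi^n$. *)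

theory Defs
  imports "HOL-Analysis.Analysis"
begin

definition det2 :: "real \<times> real \<Rightarrow> real \<times> real \<Rightarrow> real" where
  "det2 u v = fst u * snd v - snd u * fst v"

definition dP :: "(real \<Rightarrow> real \<Rightarrow> 'a::real_normed_vector) \<Rightarrow> real \<Rightarrow> real \<Rightarrow> 'a" where
  "dP F p t = vector_derivative (\<lambda>q. F q t) (at p)"

definition dT :: "(real \<Rightarrow> real \<Rightarrow> 'a::real_normed_vector) \<Rightarrow> real \<Rightarrow> real \<Rightarrow> 'a" where
  "dT F p t = vector_derivative (\<lambda>s. F p s) (at t)"

text \<open>C-infinity in (p,t) jointly: all iterated partial derivatives exist and are
  (jointly) continuous.\<close>
coinductive smooth2 :: "(real \<Rightarrow> real \<Rightarrow> real) \<Rightarrow> bool" where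
  "\<lbrakk> continuous_on UNIV (\<lambda>z. F (fst z) (snd z));
     \<forall>p t. (\<lambda>q. F q t) differentiable (at p);
     \<forall>p t. (\<lambda>s. F p s) differentiable (at t);
     smooth2 (dP F); smooth2 (dT F) \<rbrakk> \<Longrightarrow> smooth2 F"

definition smooth_curve_family :: "(real \<Rightarrow> real \<Rightarrow> real \<times> real) \<Rightarrow> bool" where
  "smooth_curve_family C \<longleftrightarrow> smooth2 (\<lambda>p t. fst (C p t)) \<and> smooth2 (\<lambda>p t. snd (C p t))"

definition ca_metric :: "(real \<Rightarrow> real \<Rightarrow> real \<times> real) \<Rightarrow> real \<Rightarrow> real \<Rightarrow> real" where
  "ca_metric C p t = sqrt (det2 (dP C p t) (dP (dP C) p t) / det2 (C p t) (dP C p t))"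

definition dXi :: "(real \<Rightarrow> real \<Rightarrow> real \<times> real) \<Rightarrow> (real \<Rightarrow> real \<Rightarrow> 'a::real_normed_vector)
                   \<Rightarrow> real \<Rightarrow> real \<Rightarrow> 'a" where
  "dXi C F p t = inverse (ca_metric C p t) *\<^sub>R dP F p t"

definition ca_curv :: "(real \<Rightarrow> real \<Rightarrow> real \<times> real) \<Rightarrow> real \<Rightarrow> real \<Rightarrow> real" where
  "ca_curv C p t = det2 (dXi C (dXi C C) p t) (C p t) / det2 (dXi C C p t) (C p t)"

definition ca_curv_deriv :: "(real \<Rightarrow> real \<Rightarrow> real \<times> real) \<Rightarrow> nat \<Rightarrow> real \<Rightarrow> real \<Rightarrow> real" where
  "ca_curv_deriv C n = (dXi C ^^ n) (ca_curv C)"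

definition sint :: "real \<Rightarrow> real \<Rightarrow> (real \<Rightarrow> real) \<Rightarrow> real" where
  "sint a b f = (if a \<le> b then integral {a..b} f else - integral {b..a} f)"

text \<open>Nonlocal term: integral of phi d xi from the base point to xi(p),
  i.e. the integral of phi * g dp from p0 to p.\<close>
definition ca_nonlocal :: "(real \<Rightarrow> real \<Rightarrow> real \<times> real) \<Rightarrow> real \<Rightarrow> real \<Rightarrow> real \<Rightarrow> real" where
  "ca_nonlocal C p0 p t = sint p0 p (\<lambda>q. ca_curv C q t * ca_metric C q t)"

end

theory Submission
  imports Defs
begin


lemma dP_eq: "((\<lambda>q. F q t) has_real_derivative D) (at p) \<Longrightarrow> dP F p t = (D::real)"
  unfolding dP_def by (simp add: has_real_derivative_iff_has_vector_derivative vector_derivative_at)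

lemma dT_eq: "((\<lambda>s. F p s) has_real_derivative D) (at t) \<Longrightarrow> dT F p t = (D::real)"
  unfolding dT_def by (simp add: has_real_derivative_iff_has_vector_derivative vector_derivative_at)

lemma dP_eqv: "((\<lambda>q. F q t) has_vector_derivative D) (at p) \<Longrightarrow> dP F p t = D"
  unfolding dP_def by (simp add: vector_derivative_at)

lemma dT_eqv: "((\<lambda>s. F p s) has_vector_derivative D) (at t) \<Longrightarrow> dT F p t = D"
  unfolding dT_def by (simp add: vector_derivative_at)

lemma smooth2_D:
  assumes "smooth2 F"
  shows "continuous_on UNIV (\<lambda>z. F (fst z) (snd z))"
    "((\<lambda>q. F q t) has_real_derivative dP F p t) (at p)"
    "((\<lambda>s. F p s) has_real_derivative dT F p t) (at t)"
    "smooth2 (dP F)" "smooth2 (dT F)"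
proof -
  from assms obtain H where h: "F = H" "continuous_on UNIV (\<lambda>z. H (fst z) (snd z))"
     "\<forall>p t. (\<lambda>q. H q t) differentiable (at p)"
     "\<forall>p t. (\<lambda>s. H p s) differentiable (at t)"
     "smooth2 (dP H)" "smooth2 (dT H)"
    by (cases rule: smooth2.cases) blast
  show "continuous_on UNIV (\<lambda>z. F (fst z) (snd z))" "smooth2 (dP F)" "smooth2 (dT F)"
    using h by simp_all
  have "((\<lambda>q. F q t) has_vector_derivative dP F p t) (at p)"
    unfolding dP_def using h(1,3) vector_derivative_works by blast
  then show "((\<lambda>q. F q t) has_real_derivative dP F p t) (at p)"
    by (simp add: has_real_derivative_iff_has_vector_derivative)
  have "((\<lambda>s. F p s) has_vector_derivative dT F p t) (at t)"
    unfolding dT_def using h(1,4) vector_derivative_works by blast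
  then show "((\<lambda>s. F p s) has_real_derivative dT F p t) (at t)"
    by (simp add: has_real_derivative_iff_has_vector_derivative)
qed

inductive sm :: "(real \<Rightarrow> real \<Rightarrow> real) \<Rightarrow> bool" where
  base: "smooth2 F \<Longrightarrow> sm F"
| const: "sm (\<lambda>p t. c)"
| add: "sm F \<Longrightarrow> sm G \<Longrightarrow> sm (\<lambda>p t. F p t + G p t)"
| mult: "sm F \<Longrightarrow> sm G \<Longrightarrow> sm (\<lambda>p t. F p t * G p t)"
| inv: "sm F \<Longrightarrow> (\<forall>p t. F p t \<noteq> 0) \<Longrightarrow> sm (\<lambda>p t. inverse (F p t))"
| sqr: "sm F \<Longrightarrow> (\<forall>p t. F p t > 0) \<Longrightarrow> sm (\<lambda>p t. sqrt (F p t))"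

lemma sm_neg: "sm F \<Longrightarrow> sm (\<lambda>p t. - F p t)"
proof -
  assume "sm F"
  then have "sm (\<lambda>p t. (-1) * F p t)" by (intro sm.mult sm.const)
  then show ?thesis by simp
qed

lemma sm_divc: "sm F \<Longrightarrow> sm (\<lambda>p t. F p t / c)"
proof -
  assume "sm F"
  then have "sm (\<lambda>p t. F p t * inverse c)" by (intro sm.mult sm.const)
  then show ?thesis by (simp add: field_simps)
qed

lemma sm_diff: "sm F \<Longrightarrow> sm G \<Longrightarrow> sm (\<lambda>p t. F p t - G p t)"
proof -
  assume "sm F" "sm G"
  then have "sm (\<lambda>p t. F p t + - G p t)" by (intro sm.add sm_neg)
  then show ?thesis by simp
qed

lemma sm_div: "sm F \<Longrightarrow> sm G \<Longrightarrow> (\<forall>p t. G p t \<noteq> 0) \<Longrightarrow> sm (\<lambda>p t. F p t / G p t)"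
proof -
  assume "sm F" "sm G" "\<forall>p t. G p t \<noteq> 0"
  then have "sm (\<lambda>p t. F p t * inverse (G p t))" by (intro sm.mult sm.inv)
  then show ?thesis by (simp add: field_simps)
qed

lemma sm_props:
  assumes "sm F"
  shows "continuous_on UNIV (\<lambda>z. F (fst z) (snd z)) \<and>
    (\<forall>p t. ((\<lambda>q. F q t) has_real_derivative dP F p t) (at p)) \<and>
    (\<forall>p t. ((\<lambda>s. F p s) has_real_derivative dT F p t) (at t)) \<and> sm (dP F) \<and> sm (dT F)"
  using assms
proof induction
  case (base F)
  then show ?case using smooth2_D[OF base] by (auto intro: sm.base)
next
  case (const c)
  have "dP (\<lambda>p t. c) = (\<lambda>p t. 0)" "dT (\<lambda>p t. c) = (\<lambda>p t. 0)"
    by (auto intro!: ext dP_eq dT_eq)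
  then show ?case by (auto intro: sm.const)
next
  case (add F G)
  have a: "sm (dP F)" "sm (dT F)" "continuous_on UNIV (\<lambda>z. F (fst z) (snd z))"
    "\<And>p t. ((\<lambda>q. F q t) has_real_derivative dP F p t) (at p)"
    "\<And>p t. ((\<lambda>s. F p s) has_real_derivative dT F p t) (at t)"
    using add(3) by blast+
  have b: "sm (dP G)" "sm (dT G)" "continuous_on UNIV (\<lambda>z. G (fst z) (snd z))"
    "\<And>p t. ((\<lambda>q. G q t) has_real_derivative dP G p t) (at p)"
    "\<And>p t. ((\<lambda>s. G p s) has_real_derivative dT G p t) (at t)"
    using add(4) by blast+
  have d1: "((\<lambda>q. F q t + G q t) has_real_derivative dP F p t + dP G p t) (at p)" for p t
    using a(4) b(4) by (rule DERIV_add)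
  have d2: "((\<lambda>s. F p s + G p s) has_real_derivative dT F p t + dT G p t) (at t)" for p t
    using a(5) b(5) by (rule DERIV_add)
  have e: "dP (\<lambda>p t. F p t + G p t) = (\<lambda>p t. dP F p t + dP G p t)"
          "dT (\<lambda>p t. F p t + G p t) = (\<lambda>p t. dT F p t + dT G p t)"
    by (intro ext dP_eq dT_eq d1 d2)+
  have c: "continuous_on UNIV (\<lambda>z. F (fst z) (snd z) + G (fst z) (snd z))"
    using a(3) b(3) by (rule continuous_on_add)
  have s: "sm (\<lambda>p t. dP F p t + dP G p t)" "sm (\<lambda>p t. dT F p t + dT G p t)"
    by (rule sm.add[OF a(1) b(1)], rule sm.add[OF a(2) b(2)])
  show ?case unfolding e by (intro conjI allI d1 d2 c s)
next
  case (mult F G)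
  have a: "sm (dP F)" "sm (dT F)" "continuous_on UNIV (\<lambda>z. F (fst z) (snd z))"
    "\<And>p t. ((\<lambda>q. F q t) has_real_derivative dP F p t) (at p)"
    "\<And>p t. ((\<lambda>s. F p s) has_real_derivative dT F p t) (at t)"
    using mult(3) by blast+
  have b: "sm (dP G)" "sm (dT G)" "continuous_on UNIV (\<lambda>z. G (fst z) (snd z))"
    "\<And>p t. ((\<lambda>q. G q t) has_real_derivative dP G p t) (at p)"
    "\<And>p t. ((\<lambda>s. G p s) has_real_derivative dT G p t) (at t)"
    using mult(4) by blast+
  have d1: "((\<lambda>q. F q t * G q t) has_real_derivative dP F p t * G p t + F p t * dP G p t) (at p)" for p t
    using DERIV_mult'[OF a(4) b(4)] by (simp add: algebra_simps)
  have d2: "((\<lambda>s. F p s * G p s) has_real_derivative dT F p t * G p t + F p t * dT G p t) (at t)" for p t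
    using DERIV_mult'[OF a(5) b(5)] by (simp add: algebra_simps)
  have e: "dP (\<lambda>p t. F p t * G p t) = (\<lambda>p t. dP F p t * G p t + F p t * dP G p t)"
          "dT (\<lambda>p t. F p t * G p t) = (\<lambda>p t. dT F p t * G p t + F p t * dT G p t)"
    by (intro ext dP_eq dT_eq d1 d2)+
  have c: "continuous_on UNIV (\<lambda>z. F (fst z) (snd z) * G (fst z) (snd z))"
    using a(3) b(3) by (rule continuous_on_mult)
  have s: "sm (\<lambda>p t. dP F p t * G p t + F p t * dP G p t)"
     "sm (\<lambda>p t. dT F p t * G p t + F p t * dT G p t)"
    by (rule sm.add[OF sm.mult[OF a(1) mult(2)] sm.mult[OF mult(1) b(1)]],
        rule sm.add[OF sm.mult[OF a(2) mult(2)] sm.mult[OF mult(1) b(2)]])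
  show ?case unfolding e by (intro conjI allI d1 d2 c s)
next
  case (inv F)
  have nz: "F p t \<noteq> 0" for p t using inv(2) by blast
  have a: "sm (dP F)" "sm (dT F)" "continuous_on UNIV (\<lambda>z. F (fst z) (snd z))"
    "\<And>p t. ((\<lambda>q. F q t) has_real_derivative dP F p t) (at p)"
    "\<And>p t. ((\<lambda>s. F p s) has_real_derivative dT F p t) (at t)"
    using inv(3) by blast+
  have d1: "((\<lambda>q. inverse (F q t)) has_real_derivative
        - (dP F p t * inverse (F p t) * inverse (F p t))) (at p)" for p t
      using DERIV_inverse_fun[OF a(4)[of t p] nz[of p t]] by (simp add: power2_eq_square mult.assoc)
  have d2: "((\<lambda>s. inverse (F p s)) has_real_derivative
        - (dT F p t * inverse (F p t) * inverse (F p t))) (at t)" for p t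
      using DERIV_inverse_fun[OF a(5)[of p t] nz[of p t]] by (simp add: power2_eq_square mult.assoc)
  have e: "dP (\<lambda>p t. inverse (F p t)) = (\<lambda>p t. - (dP F p t * inverse (F p t) * inverse (F p t)))"
          "dT (\<lambda>p t. inverse (F p t)) = (\<lambda>p t. - (dT F p t * inverse (F p t) * inverse (F p t)))"
    by (intro ext dP_eq dT_eq d1 d2)+
  have c: "continuous_on UNIV (\<lambda>z. inverse (F (fst z) (snd z)))"
    using a(3) nz by (intro continuous_on_inverse) auto
  have si: "sm (\<lambda>p t. inverse (F p t))" using inv(1,2) by (rule sm.inv)
  have s: "sm (\<lambda>p t. - (dP F p t * inverse (F p t) * inverse (F p t)))"
    "sm (\<lambda>p t. - (dT F p t * inverse (F p t) * inverse (F p t)))"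
    by (rule sm_neg[OF sm.mult[OF sm.mult[OF a(1) si] si]],
        rule sm_neg[OF sm.mult[OF sm.mult[OF a(2) si] si]])
  show ?case unfolding e by (intro conjI allI d1 d2 c s)
next
  case (sqr F)
  have pos[simp]: "\<And>p t. 0 < F p t" using sqr(2) by blast
  have nz[simp]: "F p t \<noteq> 0" "\<not> F p t < 0" for p t
    by (metis pos less_irrefl) (metis pos less_asym)
  have a: "sm (dP F)" "sm (dT F)" "continuous_on UNIV (\<lambda>z. F (fst z) (snd z))"
    "\<And>p t. ((\<lambda>q. F q t) has_real_derivative dP F p t) (at p)"
    "\<And>p t. ((\<lambda>s. F p s) has_real_derivative dT F p t) (at t)"
    using sqr(3) by blast+
  have c: "continuous_on UNIV (\<lambda>z. sqrt (F (fst z) (snd z)))"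
    using a(3) by (rule continuous_on_real_sqrt)
  have d1: "((\<lambda>q. sqrt (F q t)) has_real_derivative
        dP F p t * (1/2) * inverse (sqrt (F p t))) (at p)" for p t
    using DERIV_chain2[OF DERIV_real_sqrt[OF pos[of p t]] a(4)[of t p]] by (simp add: field_simps)
  have d2: "((\<lambda>s. sqrt (F p s)) has_real_derivative
        dT F p t * (1/2) * inverse (sqrt (F p t))) (at t)" for p t
    using DERIV_chain2[OF DERIV_real_sqrt[OF pos[of p t]] a(5)[of p t]] by (simp add: field_simps)
  have e: "dP (\<lambda>p t. sqrt (F p t)) = (\<lambda>p t. dP F p t * (1/2) * inverse (sqrt (F p t)))"
          "dT (\<lambda>p t. sqrt (F p t)) = (\<lambda>p t. dT F p t * (1/2) * inverse (sqrt (F p t)))"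
    by (intro ext dP_eq dT_eq d1 d2)+
  have si: "sm (\<lambda>p t. inverse (sqrt (F p t)))"
    by (rule sm.inv[OF sm.sqr[OF sqr(1) sqr(2)]]) simp
  have s: "sm (\<lambda>p t. dP F p t * (1/2) * inverse (sqrt (F p t)))"
    "sm (\<lambda>p t. dT F p t * (1/2) * inverse (sqrt (F p t)))"
    by (rule sm.mult[OF sm.mult[OF a(1) sm.const] si], rule sm.mult[OF sm.mult[OF a(2) sm.const] si])
  show ?case unfolding e by (intro conjI allI d1 d2 c s)
qed

lemma sm_cont: "sm F \<Longrightarrow> continuous_on UNIV (\<lambda>z. F (fst z) (snd z))"
  and sm_dp: "sm F \<Longrightarrow> ((\<lambda>q. F q t) has_real_derivative dP F p t) (at p)"
  and sm_dt: "sm F \<Longrightarrow> ((\<lambda>s. F p s) has_real_derivative dT F p t) (at t)"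
  and sm_dP: "sm F \<Longrightarrow> sm (dP F)"
  and sm_dT: "sm F \<Longrightarrow> sm (dT F)"
  using sm_props by blast+




lemma sm_near:
  assumes "sm G" "e > 0"
  shows "\<exists>d>0. \<forall>x s. \<bar>x - p\<bar> < d \<and> \<bar>s - t\<bar> < d \<longrightarrow> \<bar>G x s - G p t\<bar> < e"
proof -
  have "continuous_on UNIV (\<lambda>z. G (fst z) (snd z))" using sm_cont[OF assms(1)] .
  then obtain d where d: "d > 0" "\<And>z. dist z (p, t) < d \<Longrightarrow> dist (G (fst z) (snd z)) (G p t) < e"
    unfolding continuous_on_iff using assms(2) by fastforce
  show ?thesis
  proof (intro exI[of _ "d/2"] conjI allI impI)
    show "d/2 > 0" using d by simp
    fix x s assume a: "\<bar>x - p\<bar> < d / 2 \<and> \<bar>s - t\<bar> < d / 2"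
    have "dist (x, s) (p, t) = sqrt ((x - p)\<^sup>2 + (s - t)\<^sup>2)"
      by (simp add: dist_Pair_Pair dist_real_def)
    also have "\<dots> \<le> \<bar>x - p\<bar> + \<bar>s - t\<bar>" by (rule sqrt_sum_squares_le_sum_abs)
    also have "\<dots> < d" using a by linarith
    finally have "dist (G x s) (G p t) < e" using d(2)[of "(x, s)"] by simp
    then show "\<bar>G x s - G p t\<bar> < e" by (simp add: dist_real_def)
  qed
qed

lemma schwarz:
  assumes F: "sm F"
  shows "dP (dT F) p t = dT (dP F) p t"
proof (rule ccontr)
  define a where "a = dT (dP F) p t"
  define b where "b = dP (dT F) p t"
  assume "dP (dT F) p t \<noteq> dT (dP F) p t"
  then have ne: "a \<noteq> b" by (simp add: a_def b_def)
  define e where "e = \<bar>a - b\<bar> / 2"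
  have e: "e > 0" using ne by (simp add: e_def)
  have s1: "sm (dT (dP F))" using F by (intro sm_dT sm_dP)
  have s2: "sm (dP (dT F))" using F by (intro sm_dT sm_dP)
  obtain d1 where d1: "d1 > 0" "\<And>x s. \<bar>x - p\<bar> < d1 \<Longrightarrow> \<bar>s - t\<bar> < d1 \<Longrightarrow> \<bar>dT (dP F) x s - a\<bar> < e"
    using sm_near[OF s1 e, of p t] unfolding a_def by blast
  obtain d2 where d2: "d2 > 0" "\<And>x s. \<bar>x - p\<bar> < d2 \<Longrightarrow> \<bar>s - t\<bar> < d2 \<Longrightarrow> \<bar>dP (dT F) x s - b\<bar> < e"
    using sm_near[OF s2 e, of p t] unfolding b_def by blast
  define h where "h = min d1 d2 / 2"
  have h: "h > 0" "h < d1" "h < d2" using d1 d2 by (auto simp: h_def)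
  define D where "D = F (p + h) (t + h) - F (p + h) t - F p (t + h) + F p t"
  have dd1: "((\<lambda>x. F x (t + h) - F x t) has_real_derivative dP F x (t + h) - dP F x t) (at x)" for x
    by (rule DERIV_diff[OF sm_dp[OF F] sm_dp[OF F]])
  obtain x1 where x1: "p < x1" "x1 < p + h"
    "(F (p + h) (t + h) - F (p + h) t) - (F p (t + h) - F p t) = (p + h - p) * (dP F x1 (t + h) - dP F x1 t)"
    using MVT2[of p "p + h" "\<lambda>x. F x (t + h) - F x t" "\<lambda>x. dP F x (t + h) - dP F x t"] h
      dd1 by auto
  obtain s1 where s1': "t < s1" "s1 < t + h"
    "dP F x1 (t + h) - dP F x1 t = (t + h - t) * dT (dP F) x1 s1"
    using MVT2[of t "t + h" "\<lambda>s. dP F x1 s" "\<lambda>s. dT (dP F) x1 s"] h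
      sm_dt[OF sm_dP[OF F]] by auto
  have D1: "D = h * h * dT (dP F) x1 s1" using x1(3) s1'(3) by (simp add: D_def algebra_simps)
  have dd2: "((\<lambda>s. F (p + h) s - F p s) has_real_derivative dT F (p + h) s - dT F p s) (at s)" for s
    by (rule DERIV_diff[OF sm_dt[OF F] sm_dt[OF F]])
  obtain s2 where s2': "t < s2" "s2 < t + h"
    "(F (p + h) (t + h) - F p (t + h)) - (F (p + h) t - F p t) = (t + h - t) * (dT F (p + h) s2 - dT F p s2)"
    using MVT2[of t "t + h" "\<lambda>s. F (p + h) s - F p s" "\<lambda>s. dT F (p + h) s - dT F p s"] h
      dd2 by auto
  obtain x2 where x2: "p < x2" "x2 < p + h"
    "dT F (p + h) s2 - dT F p s2 = (p + h - p) * dP (dT F) x2 s2"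
    using MVT2[of p "p + h" "\<lambda>x. dT F x s2" "\<lambda>x. dP (dT F) x s2"] h
      sm_dp[OF sm_dT[OF F]] by auto
  have D2: "D = h * h * dP (dT F) x2 s2" using s2'(3) x2(3) by (simp add: D_def algebra_simps)
  have eq: "dT (dP F) x1 s1 = dP (dT F) x2 s2" using D1 D2 h by simp
  have "\<bar>dT (dP F) x1 s1 - a\<bar> < e" using d1(2)[of x1 s1] x1 s1' h by simp
  moreover have "\<bar>dP (dT F) x2 s2 - b\<bar> < e" using d2(2)[of x2 s2] x2 s2' h by simp
  ultimately show False using eq e_def by (simp add: abs_if split: if_splits)
qed




definition pd :: "(real \<Rightarrow> real \<Rightarrow> real) \<Rightarrow> bool" where
  "pd F \<longleftrightarrow> (\<forall>p t. ((\<lambda>q. F q t) has_real_derivative dP F p t) (at p))"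

lemma sm_pd: "sm F \<Longrightarrow> pd F"
  unfolding pd_def using sm_dp by blast

lemma pdD: "pd F \<Longrightarrow> ((\<lambda>q. F q t) has_real_derivative dP F p t) (at p)"
  unfolding pd_def by blast

lemma pd_add: assumes "pd F" "pd G"
  shows "pd (\<lambda>p t. F p t + G p t)"
    "dP (\<lambda>p t. F p t + G p t) = (\<lambda>p t. dP F p t + dP G p t)"
proof -
  have d: "((\<lambda>q. F q t + G q t) has_real_derivative dP F p t + dP G p t) (at p)" for p t
    by (rule DERIV_add[OF pdD[OF assms(1)] pdD[OF assms(2)]])
  show e: "dP (\<lambda>p t. F p t + G p t) = (\<lambda>p t. dP F p t + dP G p t)"
    by (intro ext dP_eq d)
  show "pd (\<lambda>p t. F p t + G p t)" unfolding pd_def e using d by blast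
qed

lemma pd_diff: assumes "pd F" "pd G"
  shows "pd (\<lambda>p t. F p t - G p t)"
    "dP (\<lambda>p t. F p t - G p t) = (\<lambda>p t. dP F p t - dP G p t)"
proof -
  have d: "((\<lambda>q. F q t - G q t) has_real_derivative dP F p t - dP G p t) (at p)" for p t
    by (rule DERIV_diff[OF pdD[OF assms(1)] pdD[OF assms(2)]])
  show e: "dP (\<lambda>p t. F p t - G p t) = (\<lambda>p t. dP F p t - dP G p t)"
    by (intro ext dP_eq d)
  show "pd (\<lambda>p t. F p t - G p t)" unfolding pd_def e using d by blast
qed

lemma pd_mult: assumes "pd F" "pd G"
  shows "pd (\<lambda>p t. F p t * G p t)"
    "dP (\<lambda>p t. F p t * G p t) = (\<lambda>p t. dP F p t * G p t + F p t * dP G p t)"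
proof -
  have d: "((\<lambda>q. F q t * G q t) has_real_derivative dP F p t * G p t + F p t * dP G p t) (at p)" for p t
    using DERIV_mult'[OF pdD[OF assms(1)] pdD[OF assms(2)]] by (simp add: algebra_simps)
  show e: "dP (\<lambda>p t. F p t * G p t) = (\<lambda>p t. dP F p t * G p t + F p t * dP G p t)"
    by (intro ext dP_eq d)
  show "pd (\<lambda>p t. F p t * G p t)" unfolding pd_def e using d by blast
qed

lemma pd_const: "pd (\<lambda>p t. c)" "dP (\<lambda>p t. c) = (\<lambda>p t. 0)"
proof -
  have d: "((\<lambda>q. c) has_real_derivative 0) (at p)" for p :: real by simp
  show e: "dP (\<lambda>p t. c) = (\<lambda>p t. 0)" by (intro ext dP_eq d)
  show "pd (\<lambda>p t. c)" unfolding pd_def e using d by blast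
qed

lemma pair_dP: assumes "pd F1" "pd F2"
  shows "dP (\<lambda>p t. (F1 p t, F2 p t)) = (\<lambda>p t. (dP F1 p t, dP F2 p t))"
proof (intro ext dP_eqv)
  fix p t
  show "((\<lambda>q. (F1 q t, F2 q t)) has_vector_derivative (dP F1 p t, dP F2 p t)) (at p)"
    using pdD[OF assms(1)] pdD[OF assms(2)]
    by (intro has_vector_derivative_Pair) (simp_all add: has_real_derivative_iff_has_vector_derivative)
qed

lemma pair_dT: assumes "sm F1" "sm F2"
  shows "dT (\<lambda>p t. (F1 p t, F2 p t)) p t = (dT F1 p t, dT F2 p t)"
proof (intro dT_eqv)
  show "((\<lambda>s. (F1 p s, F2 p s)) has_vector_derivative (dT F1 p t, dT F2 p t)) (at t)"
    using sm_dt[OF assms(1)] sm_dt[OF assms(2)]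
    by (intro has_vector_derivative_Pair) (simp_all add: has_real_derivative_iff_has_vector_derivative)
qed

lemma sint_split:
  assumes "continuous_on UNIV k" "a0 \<le> x" "a0 \<le> y"
  shows "sint x y k = integral {a0..y} k - integral {a0..x} k"
proof -
  have int: "k integrable_on {u..v}" for u v
    using assms(1) by (intro integrable_continuous_real) (auto intro: continuous_on_subset)
  show ?thesis
  proof (cases "x \<le> y")
    case True
    then show ?thesis using Henstock_Kurzweil_Integration.integral_combine[OF assms(2) True int] by (simp add: sint_def)
  next
    case False
    then show ?thesis using Henstock_Kurzweil_Integration.integral_combine[OF assms(3) _ int, of x] by (simp add: sint_def)
  qed
qed

lemma sint_deriv:
  assumes "continuous_on UNIV k"
  shows "((\<lambda>q. sint x0 q k) has_real_derivative k p) (at p)"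
proof -
  define a where "a = min x0 p - 1"
  define b where "b = p + 1"
  have ab: "a < p" "p < b" by (auto simp: a_def b_def)
  have "((\<lambda>u. integral {a..u} k) has_real_derivative k p) (at p within {a..b})"
    using integral_has_real_derivative[of a b k p] assms ab by (auto intro: continuous_on_subset)
  then have d1: "((\<lambda>u. integral {a..u} k) has_real_derivative k p) (at p)"
    using ab by (subst (asm) at_within_interior[of p]) auto
  have d2: "((\<lambda>u. integral {a..u} k - integral {a..x0} k) has_real_derivative k p) (at p)"
    using DERIV_diff[OF d1 DERIV_const[of "integral {a..x0} k"]] by simp
  show ?thesis
  proof (rule has_field_derivative_transform_within_open[OF d2, of "{a<..}"])
    show "open {a<..}" by simp
    show "p \<in> {a<..}" using ab by simp
    fix u assume "u \<in> {a<..}"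
    then show "integral {a..u} k - integral {a..x0} k = sint x0 u k"
      using sint_split[OF assms, of a x0 u] by (simp add: a_def)
  qed
qed




lemma sm_cont1: "sm F \<Longrightarrow> continuous_on UNIV (\<lambda>q. F q t)"
proof -
  assume "sm F"
  then have c: "continuous_on UNIV (\<lambda>z. F (fst z) (snd z))" by (rule sm_cont)
  have "continuous_on UNIV (\<lambda>q. (q, t))" by (intro continuous_intros)
  then have "continuous_on UNIV ((\<lambda>z. F (fst z) (snd z)) \<circ> (\<lambda>q. (q, t)))"
    by (rule continuous_on_compose) (rule continuous_on_subset[OF c], simp)
  then show ?thesis by (simp add: o_def)
qed

lemma dT_mult: assumes "sm F" "sm G"
  shows "dT (\<lambda>p t. F p t * G p t) p t = dT F p t * G p t + F p t * dT G p t"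
  using DERIV_mult'[OF sm_dt[OF assms(1), of p t] sm_dt[OF assms(2), of p t]]
  by (intro dT_eq) (simp add: algebra_simps)

lemma dT_add: assumes "sm F" "sm G"
  shows "dT (\<lambda>p t. F p t + G p t) p t = dT F p t + dT G p t"
  using DERIV_add[OF sm_dt[OF assms(1), of p t] sm_dt[OF assms(2), of p t]]
  by (intro dT_eq) simp

lemma dT_diff: assumes "sm F" "sm G"
  shows "dT (\<lambda>p t. F p t - G p t) p t = dT F p t - dT G p t"
  using DERIV_diff[OF sm_dt[OF assms(1), of p t] sm_dt[OF assms(2), of p t]]
  by (intro dT_eq) simp

locale cflow =
  fixes C :: "real \<Rightarrow> real \<Rightarrow> real \<times> real" and lam p0 :: real
  assumes smooth: "smooth_curve_family C"
    and closed: "\<forall>p t. C (p + 2 * pi) t = C p t"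
    and nondeg1: "\<forall>p t. det2 (C p t) (dP C p t) \<noteq> 0"
    and nondeg2: "\<forall>p t. det2 (dP C p t) (dP (dP C) p t) \<noteq> 0"
    and pos: "\<forall>p t. det2 (dP C p t) (dP (dP C) p t) / det2 (C p t) (dP C p t) > 0"
    and flow: "\<forall>p t. dT C p t =
                 (lam + ca_nonlocal C p0 p t) *\<^sub>R C p t + (ca_curv C p t / 2) *\<^sub>R dXi C C p t"
begin

definition "x1 = (\<lambda>p t. fst (C p t))"
definition "x2 = (\<lambda>p t. snd (C p t))"

lemma sm_x: "sm x1" "sm x2"
  using smooth by (auto simp: smooth_curve_family_def x1_def x2_def intro: sm.base)

lemma C_eq: "C = (\<lambda>p t. (x1 p t, x2 p t))" by (simp add: x1_def x2_def)

definition "y1 = dP x1"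
definition "y2 = dP x2"

lemma sm_y: "sm y1" "sm y2" using sm_x by (simp_all add: y1_def y2_def sm_dP)

lemma dPC: "dP C = (\<lambda>p t. (y1 p t, y2 p t))"
  unfolding y1_def y2_def by (subst C_eq, rule pair_dP) (simp_all add: sm_x sm_pd)

lemma dPPC: "dP (dP C) = (\<lambda>p t. (dP y1 p t, dP y2 p t))"
  unfolding dPC by (rule pair_dP) (simp_all add: sm_y sm_pd)

definition "D1 = (\<lambda>p t. x1 p t * y2 p t - x2 p t * y1 p t)"
definition "D2 = (\<lambda>p t. y1 p t * dP y2 p t - y2 p t * dP y1 p t)"

lemma det_C: "det2 (C p t) (dP C p t) = D1 p t"
  by (subst (1) C_eq) (simp add: dPC det2_def D1_def)

lemma det_C2: "det2 (dP C p t) (dP (dP C) p t) = D2 p t"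
  unfolding dPPC by (simp add: dPC det2_def D2_def)

lemma D1_nz: "D1 p t \<noteq> 0" using nondeg1 det_C by metis
lemma D2_nz: "D2 p t \<noteq> 0" using nondeg2 det_C2 by metis
lemma D_pos: "D2 p t / D1 p t > 0" using pos det_C det_C2 by metis

lemma sm_D: "sm D1" "sm D2"
  unfolding D1_def D2_def
  by (rule sm_diff[OF sm.mult[OF sm_x(1) sm_y(2)] sm.mult[OF sm_x(2) sm_y(1)]],
      rule sm_diff[OF sm.mult[OF sm_y(1) sm_dP[OF sm_y(2)]] sm.mult[OF sm_y(2) sm_dP[OF sm_y(1)]]])

definition "g = (\<lambda>p t. sqrt (D2 p t / D1 p t))"

lemma g_eq: "ca_metric C = g"
  by (intro ext) (simp add: ca_metric_def g_def det_C det_C2)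

lemma g_pos: "g p t > 0" using D_pos by (simp add: g_def)

lemma g_sq: "g p t * g p t = D2 p t / D1 p t"
  unfolding g_def real_sqrt_mult_self using D_pos[of p t] by (rule abs_of_pos)

lemma sm_g: "sm g"
  unfolding g_def
  by (rule sm.sqr[OF sm_div[OF sm_D(2) sm_D(1)]]) (simp_all add: D1_nz D_pos)

definition "ig = (\<lambda>p t. inverse (g p t))"

lemma sm_ig: "sm ig"
  unfolding ig_def by (rule sm.inv[OF sm_g]) (simp add: g_pos less_imp_neq[symmetric] g_pos[THEN less_imp_neq, symmetric])

lemma ig_g: "ig p t * g p t = 1" using g_pos[of p t] by (simp add: ig_def)

lemma ig_sq: "ig p t * ig p t * D2 p t = D1 p t"
proof -
  have "g p t * g p t * D1 p t = D2 p t" using g_sq[of p t] D1_nz[of p t] by (simp add: field_simps)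
  then show ?thesis using g_pos[of p t] by (simp add: ig_def field_simps)
qed

definition Dx :: "(real \<Rightarrow> real \<Rightarrow> real) \<Rightarrow> real \<Rightarrow> real \<Rightarrow> real" where
  "Dx F = (\<lambda>p t. ig p t * dP F p t)"

lemma dXi_real: "dXi C F = Dx F"
  by (intro ext) (simp add: dXi_def Dx_def g_eq ig_def)

lemma sm_Dx: "sm F \<Longrightarrow> sm (Dx F)"
  unfolding Dx_def by (rule sm.mult[OF sm_ig sm_dP])

lemma pd_Dx: "sm F \<Longrightarrow> pd (Dx F)" by (intro sm_pd sm_Dx)

lemma Dx_add: "pd F \<Longrightarrow> pd G \<Longrightarrow> Dx (\<lambda>p t. F p t + G p t) = (\<lambda>p t. Dx F p t + Dx G p t)"
  by (simp add: Dx_def pd_add algebra_simps)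

lemma Dx_diff: "pd F \<Longrightarrow> pd G \<Longrightarrow> Dx (\<lambda>p t. F p t - G p t) = (\<lambda>p t. Dx F p t - Dx G p t)"
  by (simp add: Dx_def pd_diff algebra_simps)

lemma Dx_mult: "pd F \<Longrightarrow> pd G \<Longrightarrow> Dx (\<lambda>p t. F p t * G p t) = (\<lambda>p t. Dx F p t * G p t + F p t * Dx G p t)"
  by (simp add: Dx_def pd_mult algebra_simps)

lemma Dx_const: "Dx (\<lambda>p t. c) = (\<lambda>p t. 0)"
  by (simp add: Dx_def pd_const)

definition "T1 = Dx x1"
definition "T2 = Dx x2"

lemma sm_T: "sm T1" "sm T2" unfolding T1_def T2_def using sm_x by (simp_all add: sm_Dx)

lemma dXiC: "dXi C C = (\<lambda>p t. (T1 p t, T2 p t))"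
  by (intro ext) (simp add: dXi_def dPC T1_def T2_def Dx_def y1_def y2_def g_eq ig_def)

definition "N1 = Dx T1"
definition "N2 = Dx T2"

lemma sm_N: "sm N1" "sm N2" unfolding N1_def N2_def using sm_T by (simp_all add: sm_Dx)

lemma dXiXiC: "dXi C (dXi C C) = (\<lambda>p t. (N1 p t, N2 p t))"
proof -
  have "dP (dXi C C) = (\<lambda>p t. (dP T1 p t, dP T2 p t))"
    unfolding dXiC by (rule pair_dP) (simp_all add: sm_T sm_pd)
  then show ?thesis
    by (intro ext) (simp add: dXi_def N1_def N2_def Dx_def g_eq ig_def)
qed

definition "den = (\<lambda>p t. T1 p t * x2 p t - T2 p t * x1 p t)"

lemma den_eq: "den p t = - ig p t * D1 p t"
  by (simp add: den_def T1_def T2_def Dx_def D1_def y1_def y2_def algebra_simps)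

lemma den_nz: "den p t \<noteq> 0"
  using den_eq[of p t] D1_nz[of p t] g_pos[of p t] by (simp add: ig_def)

definition "phi = (\<lambda>p t. (N1 p t * x2 p t - N2 p t * x1 p t) / den p t)"

lemma phi_eq: "ca_curv C = phi"
  unfolding ca_curv_def dXiXiC by (intro ext) (simp add: dXiC det2_def phi_def den_def x1_def x2_def)

lemma sm_den: "sm den" unfolding den_def
  by (rule sm_diff[OF sm.mult[OF sm_T(1) sm_x(2)] sm.mult[OF sm_T(2) sm_x(1)]])

lemma sm_phi: "sm phi"
  unfolding phi_def
  by (rule sm_div[OF sm_diff[OF sm.mult[OF sm_N(1) sm_x(2)] sm.mult[OF sm_N(2) sm_x(1)]] sm_den])
    (simp add: den_nz)

lemma W_eq: "N2 p t * T1 p t - N1 p t * T2 p t = - den p t"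
proof -
  have pd_ig: "pd ig" by (rule sm_pd[OF sm_ig])
  have pd_y: "pd y1" "pd y2" using sm_y by (simp_all add: sm_pd)
  have n1: "N1 p t = ig p t * (dP ig p t * y1 p t + ig p t * dP y1 p t)"
    unfolding N1_def T1_def Dx_def[of x1] y1_def[symmetric]
    by (simp add: Dx_def pd_mult[OF pd_ig pd_y(1)])
  have n2: "N2 p t = ig p t * (dP ig p t * y2 p t + ig p t * dP y2 p t)"
    unfolding N2_def T2_def Dx_def[of x2] y2_def[symmetric]
    by (simp add: Dx_def pd_mult[OF pd_ig pd_y(2)])
  have "N2 p t * T1 p t - N1 p t * T2 p t = ig p t * (ig p t * ig p t * D2 p t)"
    by (simp add: n1 n2 T1_def T2_def Dx_def y1_def[symmetric] y2_def[symmetric] D2_def algebra_simps)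
  also have "\<dots> = ig p t * D1 p t" by (simp add: ig_sq)
  finally show ?thesis by (simp add: den_eq)
qed

lemma frame1: "N1 p t = - x1 p t + phi p t * T1 p t"
proof -
  have "N1 p t * den p t - (- x1 p t * den p t + (N1 p t * x2 p t - N2 p t * x1 p t) * T1 p t)
        = x1 p t * ((N2 p t * T1 p t - N1 p t * T2 p t) + den p t)"
    by (simp add: den_def algebra_simps)
  also have "\<dots> = 0" by (simp add: W_eq)
  finally have "N1 p t * den p t = - x1 p t * den p t + (N1 p t * x2 p t - N2 p t * x1 p t) * T1 p t"
    by simp
  then show ?thesis using den_nz[of p t] by (simp add: phi_def field_simps)
qed

lemma frame2: "N2 p t = - x2 p t + phi p t * T2 p t"
proof -
  have "N2 p t * den p t - (- x2 p t * den p t + (N1 p t * x2 p t - N2 p t * x1 p t) * T2 p t)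
        = x2 p t * ((N2 p t * T1 p t - N1 p t * T2 p t) + den p t)"
    by (simp add: den_def algebra_simps)
  also have "\<dots> = 0" by (simp add: W_eq)
  finally have "N2 p t * den p t = - x2 p t * den p t + (N1 p t * x2 p t - N2 p t * x1 p t) * T2 p t"
    by simp
  then show ?thesis using den_nz[of p t] by (simp add: phi_def field_simps)
qed

definition "f = (\<lambda>p t. lam + ca_nonlocal C p0 p t)"

lemma f_deriv: "((\<lambda>q. f q t) has_real_derivative phi p t * g p t) (at p)"
proof -
  have c: "continuous_on UNIV (\<lambda>q. phi q t * g q t)"
    by (intro continuous_on_mult sm_cont1 sm_phi sm_g)
  have "((\<lambda>q. lam + sint p0 q (\<lambda>q. phi q t * g q t)) has_real_derivative 0 + phi p t * g p t) (at p)"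
    by (intro DERIV_add DERIV_const sint_deriv[OF c])
  then show ?thesis by (simp add: f_def ca_nonlocal_def phi_eq g_eq)
qed

lemma pd_f: "pd f" and dP_f: "dP f p t = phi p t * g p t"
proof -
  show e: "dP f p t = phi p t * g p t" for p t by (rule dP_eq) (rule f_deriv)
  show "pd f" unfolding pd_def e using f_deriv by blast
qed

lemma Dx_f: "Dx f = phi"
  by (intro ext) (simp add: Dx_def dP_f ig_def g_pos less_imp_neq[symmetric] field_simps
     g_pos[THEN less_imp_neq, symmetric])

lemma flow1: "dT x1 p t = f p t * x1 p t + (phi p t / 2) * T1 p t"
  and flow2: "dT x2 p t = f p t * x2 p t + (phi p t / 2) * T2 p t"
proof -
  have "dT C p t = (dT x1 p t, dT x2 p t)"
    by (subst C_eq, rule pair_dT) (simp_all add: sm_x)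
  moreover have "dT C p t = (lam + ca_nonlocal C p0 p t) *\<^sub>R C p t + (ca_curv C p t / 2) *\<^sub>R dXi C C p t"
    using flow by blast
  then have "dT C p t = (f p t * x1 p t + (phi p t / 2) * T1 p t, f p t * x2 p t + (phi p t / 2) * T2 p t)"
    by (simp add: f_def phi_eq dXiC x1_def x2_def prod_eq_iff)
  ultimately show "dT x1 p t = f p t * x1 p t + (phi p t / 2) * T1 p t"
    "dT x2 p t = f p t * x2 p t + (phi p t / 2) * T2 p t" by simp_all
qed

definition "G = (\<lambda>p t. - dT ig p t * g p t)"

lemma sm_G: "sm G" unfolding G_def by (rule sm.mult[OF sm_neg[OF sm_dT[OF sm_ig]] sm_g])

lemma commute: assumes "sm F"
  shows "dT (Dx F) p t = Dx (dT F) p t - G p t * Dx F p t"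
proof -
  have "dT (Dx F) p t = dT ig p t * dP F p t + ig p t * dT (dP F) p t"
    unfolding Dx_def by (rule dT_mult[OF sm_ig sm_dP[OF assms]])
  also have "dT (dP F) p t = dP (dT F) p t" by (rule schwarz[OF assms, symmetric])
  finally show ?thesis using ig_g[of p t]
    by (simp add: Dx_def G_def algebra_simps)
qed

end




lemma pd_cmult: assumes "pd F"
  shows "pd (\<lambda>p t. c * F p t)" "dP (\<lambda>p t. c * F p t) = (\<lambda>p t. c * dP F p t)"
  using pd_mult[OF pd_const(1) assms, of c] by (simp_all add: pd_const(2))

lemma pd_divc: assumes "pd F"
  shows "pd (\<lambda>p t. F p t / c)" "dP (\<lambda>p t. F p t / c) = (\<lambda>p t. dP F p t / c)"
  using pd_cmult[OF assms, of "inverse c"] by (simp_all add: field_simps)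

lemma dT_neg: assumes "sm F" shows "dT (\<lambda>p t. - F p t) p t = - dT F p t"
  using DERIV_minus[OF sm_dt[OF assms, of p t]] by (intro dT_eq) simp

context cflow begin

lemma Dx_divc: "pd F \<Longrightarrow> Dx (\<lambda>p t. F p t / c) = (\<lambda>p t. Dx F p t / c)"
  by (simp add: Dx_def pd_divc)

definition "A = (\<lambda>p t. phi p t / 2)"
definition "B = (\<lambda>p t. f p t + Dx phi p t / 2 + phi p t * phi p t / 2 - G p t)"
definition "cx = (\<lambda>p t. (- f p t + phi p t * A p t) - (Dx A p t - B p t + G p t))"
definition "cT = (\<lambda>p t. (- A p t + dT phi p t + phi p t * B p t)
                      - (A p t + Dx B p t + B p t * phi p t - G p t * phi p t))"

lemma sm_A: "sm A" unfolding A_def by (rule sm_divc[OF sm_phi])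

lemma Dx_A: "Dx A = (\<lambda>p t. Dx phi p t / 2)"
  unfolding A_def by (rule Dx_divc[OF sm_pd[OF sm_phi]])

lemma pd_B: "pd B"
proof -
  have a: "pd (\<lambda>p t. Dx phi p t / 2)" by (rule pd_divc(1)[OF pd_Dx[OF sm_phi]])
  have b: "pd (\<lambda>p t. phi p t * phi p t / 2)"
    by (rule pd_divc(1)[OF pd_mult(1)[OF sm_pd[OF sm_phi] sm_pd[OF sm_phi]]])
  show ?thesis unfolding B_def
    by (rule pd_diff(1)[OF pd_add(1)[OF pd_add(1)[OF pd_f a] b] sm_pd[OF sm_G]])
qed

lemma Dx_B: "Dx B p t = phi p t + Dx (Dx phi) p t / 2 + Dx (\<lambda>p t. phi p t * phi p t / 2) p t - Dx G p t"
proof -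
  have a: "pd (\<lambda>p t. Dx phi p t / 2)" by (rule pd_divc(1)[OF pd_Dx[OF sm_phi]])
  have b: "pd (\<lambda>p t. phi p t * phi p t / 2)"
    by (rule pd_divc(1)[OF pd_mult(1)[OF sm_pd[OF sm_phi] sm_pd[OF sm_phi]]])
  have "Dx B = (\<lambda>p t. Dx f p t + Dx (\<lambda>p t. Dx phi p t / 2) p t + Dx (\<lambda>p t. phi p t * phi p t / 2) p t - Dx G p t)"
    unfolding B_def
    by (simp add: Dx_diff[OF pd_add(1)[OF pd_add(1)[OF pd_f a] b] sm_pd[OF sm_G]]
        Dx_add[OF pd_add(1)[OF pd_f a] b] Dx_add[OF pd_f a])
  then show ?thesis by (simp add: Dx_f Dx_divc[OF pd_Dx[OF sm_phi]])
qed

lemma gen: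
  assumes X: "sm X" and T: "T = Dx X" and N: "N = Dx T"
    and fr: "\<And>p t. N p t = - X p t + phi p t * T p t"
    and fl: "\<And>p t. dT X p t = f p t * X p t + (phi p t / 2) * T p t"
  shows "cx p t * X p t + cT p t * T p t = 0"
proof -
  have sT: "sm T" unfolding T by (rule sm_Dx[OF X])
  have pT: "pd T" by (rule sm_pd[OF sT])
  have pX: "pd X" by (rule sm_pd[OF X])
  have pA: "pd A" by (rule sm_pd[OF sm_A])
  have dX: "dT X = (\<lambda>p t. f p t * X p t + A p t * T p t)"
    by (intro ext) (simp add: fl A_def)
  have dTT: "dT T p t = A p t * X p t + B p t * T p t" for p t
  proof -
    have "dT T p t = Dx (dT X) p t - G p t * T p t" unfolding T by (rule commute[OF X])
    also have "Dx (dT X) = (\<lambda>p t. (Dx f p t * X p t + f p t * Dx X p t) + (Dx A p t * T p t + A p t * Dx T p t))"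
      unfolding dX by (simp add: Dx_add[OF pd_mult(1)[OF pd_f pX] pd_mult(1)[OF pA pT]]
          Dx_mult[OF pd_f pX] Dx_mult[OF pA pT])
    finally show ?thesis
      by (simp add: Dx_f Dx_A T[symmetric] N[symmetric] fr A_def B_def Dx_divc[OF sm_pd[OF sm_phi]] algebra_simps)
  qed
  have dTT': "dT T = (\<lambda>p t. A p t * X p t + B p t * T p t)" by (intro ext dTT)
  have Nf: "N = (\<lambda>p t. - X p t + phi p t * T p t)" by (intro ext fr)
  have e1: "dT N p t = - (f p t * X p t + A p t * T p t) + (dT phi p t * T p t + phi p t * (A p t * X p t + B p t * T p t))"
    unfolding Nf dT_add[OF sm_neg[OF X] sm.mult[OF sm_phi sT]] dT_neg[OF X] dT_mult[OF sm_phi sT]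
    by (simp add: dX dTT)
  have e2: "dT N p t = (Dx A p t * X p t + A p t * T p t) + (Dx B p t * T p t + B p t * N p t) - G p t * N p t"
  proof -
    have "dT N p t = Dx (dT T) p t - G p t * N p t" unfolding N by (rule commute[OF sT])
    also have "Dx (dT T) = (\<lambda>p t. (Dx A p t * X p t + A p t * Dx X p t) + (Dx B p t * T p t + B p t * Dx T p t))"
      unfolding dTT' by (simp add: Dx_add[OF pd_mult(1)[OF pA pX] pd_mult(1)[OF pd_B pT]]
          Dx_mult[OF pA pX] Dx_mult[OF pd_B pT])
    finally show ?thesis by (simp add: T[symmetric] N[symmetric])
  qed
  have "cx p t * X p t + cT p t * T p t =
     (- (f p t * X p t + A p t * T p t) + (dT phi p t * T p t + phi p t * (A p t * X p t + B p t * T p t)))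
     - ((Dx A p t * X p t + A p t * T p t) + (Dx B p t * T p t + B p t * (- X p t + phi p t * T p t))
         - G p t * (- X p t + phi p t * T p t))"
    by (simp add: cx_def cT_def A_def algebra_simps)
  also have "\<dots> = 0" using e1 e2 fr[of p t] by simp
  finally show ?thesis .
qed

lemma lin_indep:
  fixes a b u1 u2 v1 v2 :: real
  assumes "a * u1 + b * v1 = 0" "a * u2 + b * v2 = 0" "v1 * u2 - v2 * u1 \<noteq> 0"
  shows "a = 0 \<and> b = 0"
proof -
  have "a * (v1 * u2 - v2 * u1) = v1 * (a * u2 + b * v2) - v2 * (a * u1 + b * v1)"
    by (simp add: algebra_simps)
  then have a: "a = 0" using assms by simp
  have "b * (v1 * u2 - v2 * u1) = u2 * (a * u1 + b * v1) - u1 * (a * u2 + b * v2)"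
    using a by (simp add: algebra_simps)
  then have "b = 0" using assms by simp
  with a show ?thesis by simp
qed

lemma cx_cT: "cx p t = 0 \<and> cT p t = 0"
proof -
  have 1: "cx p t * x1 p t + cT p t * T1 p t = 0"
    by (rule gen[OF sm_x(1) T1_def N1_def frame1 flow1])
  have 2: "cx p t * x2 p t + cT p t * T2 p t = 0"
    by (rule gen[OF sm_x(2) T2_def N2_def frame2 flow2])
  show ?thesis by (rule lin_indep[OF 1 2]) (use den_nz[of p t] in \<open>simp add: den_def\<close>)
qed

lemma G_eq: "G = (\<lambda>p t. phi p t * phi p t / 2)"
proof (intro ext)
  fix p t
  have "cx p t = 0" using cx_cT by blast
  then show "G p t = phi p t * phi p t / 2"
    by (simp add: cx_def Dx_A B_def A_def Dx_divc[OF sm_pd[OF sm_phi]] algebra_simps)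
qed

lemma phi_evol: "dT phi p t = Dx (Dx phi) p t / 2 + 2 * phi p t - phi p t * phi p t * phi p t / 2"
proof -
  have "cT p t = 0" using cx_cT by blast
  moreover have "Dx B p t = phi p t + Dx (Dx phi) p t / 2"
    using Dx_B[of p t] by (simp add: G_eq)
  ultimately show ?thesis
    by (simp add: cT_def G_eq A_def algebra_simps)
qed

lemma commute': assumes "sm F"
  shows "dT (Dx F) p t = Dx (dT F) p t - phi p t * phi p t / 2 * Dx F p t"
  using commute[OF assms] by (simp add: G_eq)

end




datatype ex = V nat | K real | Pl ex ex | Ti ex ex

primrec ev :: "(nat \<Rightarrow> real \<Rightarrow> real \<Rightarrow> real) \<Rightarrow> ex \<Rightarrow> real \<Rightarrow> real \<Rightarrow> real" where
  "ev \<Phi> (V j) p t = \<Phi> j p t"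
| "ev \<Phi> (K c) p t = c"
| "ev \<Phi> (Pl a b) p t = ev \<Phi> a p t + ev \<Phi> b p t"
| "ev \<Phi> (Ti a b) p t = ev \<Phi> a p t * ev \<Phi> b p t"

primrec dx :: "ex \<Rightarrow> ex" where
  "dx (V j) = V (Suc j)"
| "dx (K c) = K 0"
| "dx (Pl a b) = Pl (dx a) (dx b)"
| "dx (Ti a b) = Pl (Ti (dx a) b) (Ti a (dx b))"

primrec lv :: "ex \<Rightarrow> nat" where
  "lv (V j) = j"
| "lv (K c) = 0"
| "lv (Pl a b) = max (lv a) (lv b)"
| "lv (Ti a b) = max (lv a) (lv b)"

primrec bd :: "ex \<Rightarrow> real \<Rightarrow> real" where
  "bd (V j) M = M"
| "bd (K c) M = \<bar>c\<bar>"
| "bd (Pl a b) M = bd a M + bd b M"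
| "bd (Ti a b) M = bd a M * bd b M"

lemma lv_dx: "lv (dx e) \<le> Suc (lv e)"
  by (induction e) auto

lemma ev_bd: "lv e \<le> m \<Longrightarrow> (\<And>j. j \<le> m \<Longrightarrow> \<bar>\<Phi> j p t\<bar> \<le> M) \<Longrightarrow> \<bar>ev \<Phi> e p t\<bar> \<le> bd e M"
proof (induction e)
  case (V j) then show ?case by simp
next
  case (K c) then show ?case by simp
next
  case (Pl a b)
  then have h: "\<bar>ev \<Phi> a p t\<bar> \<le> bd a M" "\<bar>ev \<Phi> b p t\<bar> \<le> bd b M" by auto
  have "\<bar>ev \<Phi> a p t + ev \<Phi> b p t\<bar> \<le> \<bar>ev \<Phi> a p t\<bar> + \<bar>ev \<Phi> b p t\<bar>"
    by (rule abs_triangle_ineq)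
  then show ?case using h by (simp only: ev.simps bd.simps; linarith)
next
  case (Ti a b)
  then have h: "\<bar>ev \<Phi> a p t\<bar> \<le> bd a M" "\<bar>ev \<Phi> b p t\<bar> \<le> bd b M" by auto
  have "\<bar>ev \<Phi> a p t\<bar> * \<bar>ev \<Phi> b p t\<bar> \<le> bd a M * bd b M"
    by (rule mult_mono'[OF h(1) h(2) abs_ge_zero abs_ge_zero])
  then show ?case by (simp only: ev.simps bd.simps abs_mult)
qed

lemma ev_sm: "(\<And>j. sm (\<Phi> j)) \<Longrightarrow> sm (ev \<Phi> e)"
proof (induction e)
  case (V j)
  have "ev \<Phi> (V j) = \<Phi> j" by (intro ext) simp
  then show ?case using V by simp
next
  case (K c)
  have "ev \<Phi> (K c) = (\<lambda>p t. c)" by (intro ext) simp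
  then show ?case by (simp add: sm.const)
next
  case (Pl a b)
  have "ev \<Phi> (Pl a b) = (\<lambda>p t. ev \<Phi> a p t + ev \<Phi> b p t)" by (intro ext) simp
  then show ?case using Pl by (simp add: sm.add)
next
  case (Ti a b)
  have "ev \<Phi> (Ti a b) = (\<lambda>p t. ev \<Phi> a p t * ev \<Phi> b p t)" by (intro ext) simp
  then show ?case using Ti by (simp add: sm.mult)
qed

context cflow begin

lemma Dx_ev:
  assumes S: "\<And>j. sm (\<Phi> j)" and D: "\<And>j. \<Phi> (Suc j) = Dx (\<Phi> j)"
  shows "Dx (ev \<Phi> e) = ev \<Phi> (dx e)"
proof (induction e)
  case (V j)
  have e1: "ev \<Phi> (V j) = \<Phi> j" by (intro ext) simp
  have e2: "ev \<Phi> (dx (V j)) = \<Phi> (Suc j)" by (intro ext) simp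
  show ?case unfolding e1 e2 D ..
next
  case (K c)
  have e1: "ev \<Phi> (K c) = (\<lambda>p t. c)" by (intro ext) simp
  have e2: "ev \<Phi> (dx (K c)) = (\<lambda>p t. 0)" by (intro ext) simp
  show ?case unfolding e1 e2 by (rule Dx_const)
next
  case (Pl a b)
  have pa: "pd (ev \<Phi> a)" by (rule sm_pd[OF ev_sm[OF S]])
  have pb: "pd (ev \<Phi> b)" by (rule sm_pd[OF ev_sm[OF S]])
  have e1: "ev \<Phi> (Pl a b) = (\<lambda>p t. ev \<Phi> a p t + ev \<Phi> b p t)" by (intro ext) simp
  have e2: "ev \<Phi> (dx (Pl a b)) = (\<lambda>p t. ev \<Phi> (dx a) p t + ev \<Phi> (dx b) p t)" by (intro ext) simp
  have "Dx (\<lambda>p t. ev \<Phi> a p t + ev \<Phi> b p t) = (\<lambda>p t. Dx (ev \<Phi> a) p t + Dx (ev \<Phi> b) p t)"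
    by (rule Dx_add[OF pa pb])
  then show ?case unfolding e1 e2 Pl.IH .
next
  case (Ti a b)
  have pa: "pd (ev \<Phi> a)" by (rule sm_pd[OF ev_sm[OF S]])
  have pb: "pd (ev \<Phi> b)" by (rule sm_pd[OF ev_sm[OF S]])
  have e1: "ev \<Phi> (Ti a b) = (\<lambda>p t. ev \<Phi> a p t * ev \<Phi> b p t)" by (intro ext) simp
  have e2: "ev \<Phi> (dx (Ti a b)) = (\<lambda>p t. ev \<Phi> (dx a) p t * ev \<Phi> b p t + ev \<Phi> a p t * ev \<Phi> (dx b) p t)"
    by (intro ext) simp
  have "Dx (\<lambda>p t. ev \<Phi> a p t * ev \<Phi> b p t) = (\<lambda>p t. Dx (ev \<Phi> a) p t * ev \<Phi> b p t + ev \<Phi> a p t * Dx (ev \<Phi> b) p t)"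
    by (rule Dx_mult[OF pa pb])
  then show ?case unfolding e1 e2 Ti.IH .
qed

definition "ph n = (Dx ^^ n) phi"

lemma ph_Suc: "ph (Suc n) = Dx (ph n)" by (simp add: ph_def)
lemma ph_0: "ph 0 = phi" by (simp add: ph_def)

lemma sm_ph: "sm (ph n)"
  by (induction n) (simp_all add: ph_0 sm_phi ph_Suc sm_Dx)

lemma ca_curv_deriv_eq: "ca_curv_deriv C n = ph n"
proof -
  have "dXi C = (Dx :: (real \<Rightarrow> real \<Rightarrow> real) \<Rightarrow> _)" by (intro ext) (simp add: dXi_real)
  then show ?thesis by (simp add: ca_curv_deriv_def ph_def phi_eq)
qed

definition "Q n = (\<lambda>p t. dT (ph n) p t - ph (Suc (Suc n)) p t / 2)"

lemma sm_Q: "sm (Q n)" unfolding Q_def by (intro sm_diff sm_dT sm_ph sm_divc)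

lemma Q_0: "Q 0 p t = 2 * phi p t - phi p t * phi p t * phi p t / 2"
  by (simp add: Q_def ph_Suc ph_0 phi_evol)

lemma Q_Suc: "Q (Suc n) = (\<lambda>p t. Dx (Q n) p t - phi p t * phi p t / 2 * ph (Suc n) p t)"
proof (intro ext)
  fix p t
  have e: "dT (ph n) = (\<lambda>p t. ph (Suc (Suc n)) p t / 2 + Q n p t)"
    by (intro ext) (simp add: Q_def)
  have "dT (ph (Suc n)) p t = Dx (dT (ph n)) p t - phi p t * phi p t / 2 * ph (Suc n) p t"
    unfolding ph_Suc[of n] by (rule commute'[OF sm_ph])
  also have "Dx (dT (ph n)) = (\<lambda>p t. ph (Suc (Suc (Suc n))) p t / 2 + Dx (Q n) p t)"
    unfolding e
    by (simp add: Dx_add[OF pd_divc(1)[OF sm_pd[OF sm_ph]] sm_pd[OF sm_Q]] Dx_divc[OF sm_pd[OF sm_ph]]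
         ph_Suc[of "Suc (Suc n)"])
  finally show "Q (Suc n) p t = Dx (Q n) p t - phi p t * phi p t / 2 * ph (Suc n) p t"
    by (simp add: Q_def)
qed

lemma ph_D: "ph (Suc j) = Dx (ph j)" by (rule ph_Suc)

lemma Q_struct: "n \<ge> 1 \<Longrightarrow> \<exists>a b. lv a \<le> n - 1 \<and> lv b \<le> n - 1 \<and>
   (\<forall>p t. Q n p t = ev ph a p t * ph n p t + ev ph b p t)"
proof (induction n rule: nat_induct_at_least)
  case base
  define e0 where "e0 = Pl (Ti (K 2) (V 0)) (Ti (K (-1/2)) (Ti (V 0) (Ti (V 0) (V 0))))"
  have q0: "Q 0 = ev ph e0" by (intro ext) (simp add: Q_0 e0_def ph_0 algebra_simps)
  have "Q 1 p t = ev ph (Pl (K 2) (Ti (K (-2)) (Ti (V 0) (V 0)))) p t * ph 1 p t + ev ph (K 0) p t" for p t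
  proof -
    have "Q 1 p t = Dx (ev ph e0) p t - phi p t * phi p t / 2 * ph 1 p t"
      using Q_Suc[of 0] q0 by simp
    also have "Dx (ev ph e0) = ev ph (dx e0)" by (rule Dx_ev[of ph, OF sm_ph ph_D])
    finally show ?thesis by (simp add: e0_def ph_0 algebra_simps)
  qed
  then show ?case by (intro exI[of _ "Pl (K 2) (Ti (K (-2)) (Ti (V 0) (V 0)))"] exI[of _ "K 0"]) simp
next
  case (Suc n)
  then obtain a b where ab: "lv a \<le> n - 1" "lv b \<le> n - 1"
    "\<And>p t. Q n p t = ev ph a p t * ph n p t + ev ph b p t" by blast
  have qn: "Q n = ev ph (Pl (Ti a (V n)) b)" by (intro ext) (simp add: ab(3))
  define a' where "a' = Pl a (Ti (K (-1/2)) (Ti (V 0) (V 0)))"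
  define b' where "b' = Pl (Ti (dx a) (V n)) (dx b)"
  have "Q (Suc n) p t = ev ph a' p t * ph (Suc n) p t + ev ph b' p t" for p t
  proof -
    have "Q (Suc n) p t = Dx (ev ph (Pl (Ti a (V n)) b)) p t - phi p t * phi p t / 2 * ph (Suc n) p t"
      using Q_Suc[of n] qn by simp
    also have "Dx (ev ph (Pl (Ti a (V n)) b)) = ev ph (dx (Pl (Ti a (V n)) b))" by (rule Dx_ev[of ph, OF sm_ph ph_D])
    finally show ?thesis by (simp add: a'_def b'_def ph_0 algebra_simps)
  qed
  moreover have "lv a' \<le> Suc n - 1" using ab(1) by (simp add: a'_def)
  moreover have "lv b' \<le> Suc n - 1"
  proof -
    have "lv (dx a) \<le> n" using lv_dx[of a] ab(1) Suc.hyps by linarith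
    moreover have "lv (dx b) \<le> n" using lv_dx[of b] ab(2) Suc.hyps by linarith
    ultimately show ?thesis by (simp add: b'_def)
  qed
  ultimately show ?case by (intro exI[of _ a'] exI[of _ b']) simp
qed

lemma Q_ex: "\<exists>e. lv e \<le> n \<and> (\<forall>p t. Q n p t = ev ph e p t)"
proof (cases "n = 0")
  case True
  define e0 where "e0 = Pl (Ti (K 2) (V 0)) (Ti (K (-1/2)) (Ti (V 0) (Ti (V 0) (V 0))))"
  have "Q 0 p t = ev ph e0 p t" for p t by (simp add: Q_0 e0_def ph_0 algebra_simps)
  then show ?thesis using True by (intro exI[of _ e0]) (simp add: e0_def)
next
  case False
  then obtain a b where ab: "lv a \<le> n - 1" "lv b \<le> n - 1"
    "\<And>p t. Q n p t = ev ph a p t * ph n p t + ev ph b p t" using Q_struct[of n] by auto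
  show ?thesis using ab False by (intro exI[of _ "Pl (Ti a (V n)) b"]) auto
qed

end




lemma per_dP:
  assumes per: "\<And>p t. F (p + c) t = F p t" and d: "pd F"
  shows "dP F (p + c) t = dP F p t"
proof -
  have "((\<lambda>q. F q t) has_real_derivative dP F (p + c) t) (at (p + c))" by (rule pdD[OF d])
  then have "((\<lambda>q. F (q + c) t) has_real_derivative dP F (p + c) t) (at p)"
    by (simp add: DERIV_shift)
  then have "((\<lambda>q. F q t) has_real_derivative dP F (p + c) t) (at p)" by (simp add: per)
  then show ?thesis by (rule dP_eq[symmetric])
qed

lemma per_int:
  assumes "\<And>p. h (p + c) = (h p :: real)"
  shows "h (p + of_int k * c) = h p"
proof (induction k rule: int_induct[where k=0])
  case base then show ?case by simp
next
  case (step1 i)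
  have "h (p + of_int (i + 1) * c) = h ((p + of_int i * c) + c)" by (simp add: algebra_simps)
  also have "\<dots> = h (p + of_int i * c)" by (rule assms)
  finally show ?case using step1 by simp
next
  case (step2 i)
  have "h (p + of_int i * c) = h ((p + of_int (i - 1) * c) + c)" by (simp add: algebra_simps)
  also have "\<dots> = h (p + of_int (i - 1) * c)" by (rule assms)
  finally show ?case using step2 by simp
qed

lemma per_reduce:
  assumes "\<And>p. h (p + 2 * pi) = (h p :: real)"
  shows "\<exists>q \<in> {0..2*pi}. h q = h p"
proof -
  define k where "k = \<lfloor>p / (2 * pi)\<rfloor>"
  define q where "q = p - of_int k * (2 * pi)"
  have "of_int k \<le> p / (2 * pi)" "p / (2 * pi) < of_int k + 1" unfolding k_def by linarith+
  then have "of_int k * (2 * pi) \<le> p" "p < (of_int k + 1) * (2 * pi)"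
    using pi_gt_zero by (simp_all add: field_simps)
  then have q: "0 \<le> q" "q \<le> 2 * pi" unfolding q_def by (simp_all add: algebra_simps)
  have "h (q + of_int k * (2 * pi)) = h q" by (rule per_int[of h, OF assms])
  then have "h q = h p" by (simp add: q_def)
  with q show ?thesis by auto
qed

lemma deriv_nonneg_left:
  assumes d: "(f has_real_derivative l) (at x)" and ax: "a < x"
    and mx: "\<And>y. a \<le> y \<Longrightarrow> y \<le> x \<Longrightarrow> f y \<le> f x"
  shows "l \<ge> 0"
proof (rule ccontr)
  assume "\<not> l \<ge> 0"
  then have "l < 0" by simp
  from DERIV_neg_dec_left[OF d this] obtain e where e: "e > 0" "\<And>h. h > 0 \<Longrightarrow> h < e \<Longrightarrow> f x < f (x - h)"
    by blast
  define h where "h = min e (x - a) / 2"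
  have h: "h > 0" "h < e" "h \<le> x - a" using e ax by (auto simp: h_def)
  have "f x < f (x - h)" using e(2)[OF h(1,2)] .
  moreover have "f (x - h) \<le> f x" using mx h by simp
  ultimately show False by simp
qed

lemma second_deriv_max:
  assumes d1: "\<And>y. (f has_real_derivative f' y) (at y)"
    and d2: "(f' has_real_derivative l) (at x)"
    and mx: "\<And>y. f y \<le> f x"
  shows "f' x = 0" "l \<le> 0"
proof -
  show z: "f' x = 0" by (rule DERIV_local_max[OF d1[of x], of 1]) (use mx in auto)
  show "l \<le> 0"
  proof (rule ccontr)
    assume "\<not> l \<le> 0"
    then have "l > 0" by simp
    from DERIV_pos_inc_right[OF d2 this] obtain e where
      e: "e > 0" "\<And>h. h > 0 \<Longrightarrow> h < e \<Longrightarrow> f' x < f' (x + h)" by blast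
    define h where "h = e / 2"
    have h: "h > 0" "h < e" using e by (auto simp: h_def)
    obtain z where z1: "x < z" "z < x + h" "f (x + h) - f x = (x + h - x) * f' z"
      using MVT2[of x "x + h" f f'] h d1 by auto
    have "f' z > 0" using e(2)[of "z - x"] z1 h z by simp
    then have "f (x + h) - f x > 0" using z1(3) h by simp
    with mx[of "x + h"] show False by simp
  qed
qed

lemma key_ineq:
  fixes U V U1 U2 Qn Qm ps K Aa Bb M E :: real
  assumes ps: "0 < ps" "ps \<le> 1"
    and tt: "0 \<le> U * U + 2 * ps * U * (U2 / 2 + Qn) + 2 * K * V * (U1 / 2 + Qm)"
    and sp: "ps * (U1 * U1 + U * U2) + K * (U * U + V * U1) \<le> 0"
    and bq: "\<bar>Qn\<bar> \<le> Aa * \<bar>U\<bar> + Bb" and bv: "\<bar>V\<bar> \<le> M" and bm: "\<bar>Qm\<bar> \<le> E"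
    and K: "K = 2 * Aa + 2" and pos: "Aa \<ge> 0" "Bb \<ge> 0"
  shows "U * U \<le> 4 * (Bb * Bb) + 4 * (K * (M * E))"
proof -
  have M: "M \<ge> 0" using bv by linarith
  have E: "E \<ge> 0" using bm by linarith
  have e1: "2 * ps * U * (U2 / 2 + Qn) = ps * (U * U2) + 2 * (ps * U * Qn)" by (simp add: algebra_simps)
  have e2: "2 * K * V * (U1 / 2 + Qm) = K * (V * U1) + 2 * (K * V * Qm)" by (simp add: algebra_simps)
  have e3: "ps * (U1 * U1 + U * U2) + K * (U * U + V * U1) = ps * (U1 * U1) + ps * (U * U2) + K * (U * U) + K * (V * U1)"
    by (simp add: algebra_simps)
  have s1: "0 \<le> U * U + 2 * (ps * U * Qn) + 2 * (K * V * Qm) - ps * (U1 * U1) - K * (U * U)"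
    using tt sp e1 e2 e3 by linarith
  have s2: "ps * (U1 * U1) \<ge> 0" using ps by simp
  have "\<bar>U * Qn\<bar> \<le> \<bar>U\<bar> * (Aa * \<bar>U\<bar> + Bb)"
    unfolding abs_mult by (rule mult_left_mono[OF bq abs_ge_zero])
  also have "\<dots> = Aa * (U * U) + Bb * \<bar>U\<bar>" by (simp add: algebra_simps abs_mult_self_eq)
  finally have s3a: "\<bar>U * Qn\<bar> \<le> Aa * (U * U) + Bb * \<bar>U\<bar>" .
  have "ps * (U * Qn) \<le> ps * \<bar>U * Qn\<bar>" by (rule mult_left_mono[OF abs_ge_self]) (use ps in simp)
  also have "\<dots> \<le> 1 * \<bar>U * Qn\<bar>" by (rule mult_right_mono[OF ps(2) abs_ge_zero])
  finally have s3b: "ps * (U * Qn) \<le> \<bar>U * Qn\<bar>" by simp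
  have s3: "ps * U * Qn \<le> Aa * (U * U) + Bb * \<bar>U\<bar>" using s3a s3b by (simp only: mult.assoc; linarith)
  have "\<bar>V * Qm\<bar> \<le> M * E" unfolding abs_mult by (rule mult_mono[OF bv bm M abs_ge_zero])
  then have "V * Qm \<le> M * E" by (rule abs_le_D1)
  moreover have K0: "K \<ge> 0" using K pos by simp
  ultimately have "K * (V * Qm) \<le> K * (M * E)" by (rule mult_left_mono)
  then have s4: "K * V * Qm \<le> K * (M * E)" by (simp only: mult.assoc)
  have eK: "K * (U * U) = 2 * (Aa * (U * U)) + 2 * (U * U)" by (simp add: K algebra_simps)
  have s5: "U * U \<le> 2 * (Bb * \<bar>U\<bar>) + 2 * (K * (M * E))"
    using s1 s2 s3 s4 eK by linarith
  have "0 \<le> (\<bar>U\<bar> - 2 * Bb) * (\<bar>U\<bar> - 2 * Bb)" by simp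
  moreover have "(\<bar>U\<bar> - 2 * Bb) * (\<bar>U\<bar> - 2 * Bb) = U * U - 4 * (Bb * \<bar>U\<bar>) + 4 * (Bb * Bb)"
    by (simp add: algebra_simps abs_mult_self_eq)
  ultimately have s6: "4 * (Bb * \<bar>U\<bar>) \<le> U * U + 4 * (Bb * Bb)" by linarith
  show ?thesis using s5 s6 by linarith
qed




context cflow begin

lemma per_x: "x1 (p + 2 * pi) t = x1 p t" "x2 (p + 2 * pi) t = x2 p t"
  using closed by (simp_all add: x1_def x2_def)

lemma per_y: "y1 (p + 2 * pi) t = y1 p t" "y2 (p + 2 * pi) t = y2 p t"
  unfolding y1_def y2_def by (rule per_dP[OF per_x(1) sm_pd[OF sm_x(1)]], rule per_dP[OF per_x(2) sm_pd[OF sm_x(2)]])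

lemma per_z: "dP y1 (p + 2 * pi) t = dP y1 p t" "dP y2 (p + 2 * pi) t = dP y2 p t"
  by (rule per_dP[OF per_y(1) sm_pd[OF sm_y(1)]], rule per_dP[OF per_y(2) sm_pd[OF sm_y(2)]])

lemma per_ig: "ig (p + 2 * pi) t = ig p t"
  by (simp add: ig_def g_def D1_def D2_def per_x per_y per_z)

lemma per_g: "g (p + 2 * pi) t = g p t"
  by (simp add: g_def D1_def D2_def per_x per_y per_z)

lemma per_Dx: assumes "\<And>p t. F (p + 2 * pi) t = F p t" "pd F"
  shows "Dx F (p + 2 * pi) t = Dx F p t"
  by (simp add: Dx_def per_ig per_dP[OF assms])

lemma per_T: "T1 (p + 2 * pi) t = T1 p t" "T2 (p + 2 * pi) t = T2 p t"
  unfolding T1_def T2_def by (rule per_Dx[OF per_x(1) sm_pd[OF sm_x(1)]], rule per_Dx[OF per_x(2) sm_pd[OF sm_x(2)]])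

lemma per_N: "N1 (p + 2 * pi) t = N1 p t" "N2 (p + 2 * pi) t = N2 p t"
  unfolding N1_def N2_def by (rule per_Dx[OF per_T(1) sm_pd[OF sm_T(1)]], rule per_Dx[OF per_T(2) sm_pd[OF sm_T(2)]])

lemma per_phi: "phi (p + 2 * pi) t = phi p t"
  by (simp add: phi_def den_def per_x per_T per_N)

lemma per_ph: "ph n (p + 2 * pi) t = ph n p t"
proof (induction n arbitrary: p t)
  case 0 then show ?case by (simp add: ph_0 per_phi)
next
  case (Suc n) then show ?case unfolding ph_Suc by (rule per_Dx[OF _ sm_pd[OF sm_ph]])
qed

lemma dP_ph: "dP (ph n) p t = g p t * ph (Suc n) p t"
  using g_pos[of p t] by (simp add: ph_Suc Dx_def ig_def)

lemma d_ph: "((\<lambda>q. ph n q t) has_real_derivative g p t * ph (Suc n) p t) (at p)"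
  using sm_dp[OF sm_ph[of n], of t p] by (simp add: dP_ph)

lemma dt_ph: "((\<lambda>s. ph n p s) has_real_derivative ph (Suc (Suc n)) p t / 2 + Q n p t) (at t)"
  using sm_dt[OF sm_ph[of n], of p t] by (simp add: Q_def)

lemma d_g: "((\<lambda>q. g q t) has_real_derivative dP g p t) (at p)"
  by (rule sm_dp[OF sm_g])

end




context cflow begin

lemma bound_step:
  assumes n: "n \<ge> 1" and hM: "\<And>j p t. j \<le> n - 1 \<Longrightarrow> \<bar>ph j p t\<bar> \<le> M"
  shows "\<exists>B. \<forall>p t. \<bar>ph n p t\<bar> \<le> B"
proof -
  obtain a b where ab: "lv a \<le> n - 1" "lv b \<le> n - 1"
    "\<And>p t. Q n p t = ev ph a p t * ph n p t + ev ph b p t" using Q_struct[OF n] by blast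
  obtain e where e: "lv e \<le> n - 1" "\<And>p t. Q (n - 1) p t = ev ph e p t" using Q_ex[of "n - 1"] by blast
  define Aa where "Aa = bd a M"
  define Bb where "Bb = bd b M"
  define E where "E = bd e M"
  have ba: "\<bar>ev ph a p t\<bar> \<le> Aa" for p t unfolding Aa_def by (rule ev_bd[of a "n - 1" ph p t M, OF ab(1) hM])
  have bb: "\<bar>ev ph b p t\<bar> \<le> Bb" for p t unfolding Bb_def by (rule ev_bd[of b "n - 1" ph p t M, OF ab(2) hM])
  have be: "\<bar>Q (n - 1) p t\<bar> \<le> E" for p t unfolding E_def e(2) by (rule ev_bd[of e "n - 1" ph p t M, OF e(1) hM])
  have M0: "M \<ge> 0" using hM[of 0 0 0] by linarith
  have A0: "Aa \<ge> 0" using ba[of 0 0] by linarith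
  have B0: "Bb \<ge> 0" using bb[of 0 0] by linarith
  have E0: "E \<ge> 0" using be[of 0 0] by linarith
  have bQ: "\<bar>Q n p t\<bar> \<le> Aa * \<bar>ph n p t\<bar> + Bb" for p t
  proof -
    have "\<bar>Q n p t\<bar> \<le> \<bar>ev ph a p t\<bar> * \<bar>ph n p t\<bar> + \<bar>ev ph b p t\<bar>"
      unfolding ab(3) by (metis abs_mult abs_triangle_ineq)
    also have "\<dots> \<le> Aa * \<bar>ph n p t\<bar> + Bb"
      by (intro add_mono mult_right_mono ba bb) simp
    finally show ?thesis .
  qed
  have bv: "\<bar>ph (n - 1) p t\<bar> \<le> M" for p t by (rule hM) simp
  define K where "K = 2 * Aa + 2"
  have K0: "K \<ge> 0" using A0 by (simp add: K_def)
  define X where "X = 4 * (Bb * Bb) + 4 * (K * (M * E))"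
  have X0: "X \<ge> 0" using B0 K0 M0 E0 by (simp add: X_def)
  define W where "W = X + K * (M * M)"
  have sn: "Suc (n - 1) = n" using n by simp
  have ssn: "Suc (Suc (n - 1)) = Suc n" using n by simp
  have main: "ph n p t0 * ph n p t0 \<le> W" for p t0
  proof -
    define u where "u = ph n"
    define v where "v = ph (n - 1)"
    define u1 where "u1 = ph (Suc n)"
    define u2 where "u2 = ph (Suc (Suc n))"
    define wf where "wf = (\<lambda>q s. (s - t0 + 1) * (u q s * u q s) + K * (v q s * v q s))"
    define R where "R = {0..2*pi} \<times> {t0 - 1..t0}"
    have cR: "compact R" unfolding R_def by (intro compact_Times compact_Icc)
    have neR: "R \<noteq> {}" unfolding R_def using pi_gt_zero by auto
    have cu: "continuous_on UNIV (\<lambda>z. u (fst z) (snd z))" unfolding u_def by (rule sm_cont[OF sm_ph])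
    have cv: "continuous_on UNIV (\<lambda>z. v (fst z) (snd z))" unfolding v_def by (rule sm_cont[OF sm_ph])
    have cw: "continuous_on R (\<lambda>z. wf (fst z) (snd z))"
      unfolding wf_def
      by (intro continuous_intros continuous_on_subset[OF cu] continuous_on_subset[OF cv]) auto
    obtain z where zR: "z \<in> R" and zmax: "\<And>y. y \<in> R \<Longrightarrow> wf (fst y) (snd y) \<le> wf (fst z) (snd z)"
      using continuous_attains_sup[OF cR neR cw] by blast
    define ps where "ps = fst z"
    define ts where "ts = snd z"
    have ps: "0 \<le> ps" "ps \<le> 2 * pi" and ts: "t0 - 1 \<le> ts" "ts \<le> t0"
      using zR by (auto simp: R_def ps_def ts_def)
    have mx: "\<And>q s. q \<in> {0..2*pi} \<Longrightarrow> s \<in> {t0-1..t0} \<Longrightarrow> wf q s \<le> wf ps ts"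
      using zmax unfolding R_def ps_def ts_def by force
    have vM: "v q s * v q s \<le> M * M" for q s
    proof -
      have "\<bar>v q s\<bar> \<le> M" unfolding v_def by (rule bv)
      then have "\<bar>v q s\<bar> * \<bar>v q s\<bar> \<le> M * M" by (intro mult_mono) simp_all
      then show ?thesis by (simp add: abs_mult_self_eq)
    qed
    have wmax: "wf ps ts \<le> W"
    proof (cases "ts = t0 - 1")
      case True
      then have "wf ps ts = K * (v ps ts * v ps ts)" by (simp add: wf_def)
      also have "\<dots> \<le> K * (M * M)" by (rule mult_left_mono[OF vM K0])
      finally show ?thesis using X0 by (simp add: W_def)
    next
      case False
      then have tsgt: "t0 - 1 < ts" using ts by simp
      define psi where "psi = ts - t0 + 1"
      have psi: "0 < psi" "psi \<le> 1" using tsgt ts by (auto simp: psi_def)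
      have du: "((\<lambda>s. u ps s) has_real_derivative u2 ps ts / 2 + Q n ps ts) (at ts)"
        unfolding u_def u2_def by (rule dt_ph)
      have dv: "((\<lambda>s. v ps s) has_real_derivative u1 ps ts / 2 + Q (n - 1) ps ts) (at ts)"
        unfolding v_def u1_def using dt_ph[of "n - 1" ps ts] by (simp only: ssn)
      have dpsi: "((\<lambda>s. s - t0 + 1) has_real_derivative 1) (at ts)"
        by (auto intro!: derivative_eq_intros)
      have dw: "((\<lambda>s. wf ps s) has_real_derivative
          ((ts - t0 + 1) * (u ps ts * (u2 ps ts / 2 + Q n ps ts) + (u2 ps ts / 2 + Q n ps ts) * u ps ts)
             + 1 * (u ps ts * u ps ts))
          + K * (v ps ts * (u1 ps ts / 2 + Q (n - 1) ps ts) + (u1 ps ts / 2 + Q (n - 1) ps ts) * v ps ts)) (at ts)"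
        unfolding wf_def
        by (rule DERIV_add[OF DERIV_mult'[OF dpsi DERIV_mult'[OF du du]] DERIV_cmult[OF DERIV_mult'[OF dv dv]]])
      have tt0: "0 \<le> ((ts - t0 + 1) * (u ps ts * (u2 ps ts / 2 + Q n ps ts) + (u2 ps ts / 2 + Q n ps ts) * u ps ts)
             + 1 * (u ps ts * u ps ts))
          + K * (v ps ts * (u1 ps ts / 2 + Q (n - 1) ps ts) + (u1 ps ts / 2 + Q (n - 1) ps ts) * v ps ts)"
        by (rule deriv_nonneg_left[OF dw tsgt]) (use mx ps ts in auto)
      have tt: "0 \<le> u ps ts * u ps ts + 2 * psi * u ps ts * (u2 ps ts / 2 + Q n ps ts)
          + 2 * K * v ps ts * (u1 ps ts / 2 + Q (n - 1) ps ts)"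
        using tt0 by (simp add: psi_def algebra_simps)
      define zf where "zf = (\<lambda>q. psi * (u q ts * u1 q ts) + K * (v q ts * u q ts))"
      have dup: "((\<lambda>q. u q ts) has_real_derivative g y ts * u1 y ts) (at y)" for y
        unfolding u_def u1_def by (rule d_ph)
      have du1p: "((\<lambda>q. u1 q ts) has_real_derivative g y ts * u2 y ts) (at y)" for y
        unfolding u1_def u2_def by (rule d_ph)
      have dvp: "((\<lambda>q. v q ts) has_real_derivative g y ts * u y ts) (at y)" for y
        unfolding v_def u_def using d_ph[of "n - 1" ts y] by (simp only: sn)
      have d1: "((\<lambda>q. wf q ts) has_real_derivative 2 * g y ts * zf y) (at y)" for y
      proof -
        have "((\<lambda>q. wf q ts) has_real_derivative
           psi * (u y ts * (g y ts * u1 y ts) + (g y ts * u1 y ts) * u y ts)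
           + K * (v y ts * (g y ts * u y ts) + (g y ts * u y ts) * v y ts)) (at y)"
          unfolding wf_def psi_def[symmetric]
          by (rule DERIV_add[OF DERIV_cmult[OF DERIV_mult'[OF dup dup]] DERIV_cmult[OF DERIV_mult'[OF dvp dvp]]])
        then show ?thesis by (rule DERIV_cong) (simp add: zf_def algebra_simps)
      qed
      have dz: "(zf has_real_derivative
          psi * (u ps ts * (g ps ts * u2 ps ts) + (g ps ts * u1 ps ts) * u1 ps ts)
          + K * (v ps ts * (g ps ts * u1 ps ts) + (g ps ts * u ps ts) * u ps ts)) (at ps)"
        unfolding zf_def
        by (rule DERIV_add[OF DERIV_cmult[OF DERIV_mult'[OF dup du1p]] DERIV_cmult[OF DERIV_mult'[OF dvp dup]]])
      define zd where "zd = psi * (u ps ts * (g ps ts * u2 ps ts) + (g ps ts * u1 ps ts) * u1 ps ts)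
          + K * (v ps ts * (g ps ts * u1 ps ts) + (g ps ts * u ps ts) * u ps ts)"
      have d2: "((\<lambda>y. 2 * g y ts * zf y) has_real_derivative 2 * (g ps ts * zd + dP g ps ts * zf ps)) (at ps)"
      proof -
        have "((\<lambda>y. 2 * (g y ts * zf y)) has_real_derivative 2 * (g ps ts * zd + dP g ps ts * zf ps)) (at ps)"
          by (rule DERIV_cmult[OF DERIV_mult'[OF d_g dz[folded zd_def]]])
        then show ?thesis by (simp add: mult.assoc)
      qed
      have smx: "wf y ts \<le> wf ps ts" for y
      proof -
        have "\<And>q. wf (q + 2 * pi) ts = wf q ts"
          by (simp add: wf_def u_def v_def per_ph)
        then obtain q where q: "q \<in> {0..2*pi}" "wf q ts = wf y ts"
          using per_reduce[of "\<lambda>q. wf q ts" y] by blast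
        then show ?thesis using mx[of q ts] ts by simp
      qed
      have z0: "2 * g ps ts * zf ps = 0" and l0: "2 * (g ps ts * zd + dP g ps ts * zf ps) \<le> 0"
        using second_deriv_max[OF d1 d2 smx] by blast+
      have zf0: "zf ps = 0" using z0 g_pos[of ps ts] by simp
      have "g ps ts * zd \<le> 0" using l0 zf0 by (simp add: mult.commute)
      then have zd0: "zd \<le> 0" using g_pos[of ps ts] by (simp add: mult_le_0_iff)
      have "zd = g ps ts * (psi * (u1 ps ts * u1 ps ts + u ps ts * u2 ps ts) + K * (u ps ts * u ps ts + v ps ts * u1 ps ts))"
        by (simp add: zd_def algebra_simps)
      then have sp: "psi * (u1 ps ts * u1 ps ts + u ps ts * u2 ps ts) + K * (u ps ts * u ps ts + v ps ts * u1 ps ts) \<le> 0"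
        using zd0 g_pos[of ps ts] by (simp add: mult_le_0_iff)
      have key: "u ps ts * u ps ts \<le> X"
        unfolding X_def
        by (rule key_ineq[OF psi tt sp _ _ _ K_def A0 B0])
           (use bQ[of ps ts] bv[of ps ts] be[of ps ts] in \<open>simp_all add: u_def v_def\<close>)
      have "wf ps ts = psi * (u ps ts * u ps ts) + K * (v ps ts * v ps ts)" by (simp add: wf_def psi_def)
      also have "\<dots> \<le> 1 * X + K * (M * M)"
      proof (rule add_mono)
        show "psi * (u ps ts * u ps ts) \<le> 1 * X"
          by (rule mult_mono[OF psi(2) key]) (use psi in simp_all)
        show "K * (v ps ts * v ps ts) \<le> K * (M * M)" by (rule mult_left_mono[OF vM K0])
      qed
      finally show ?thesis by (simp add: W_def)
    qed
    have "\<And>q. u (q + 2 * pi) t0 * u (q + 2 * pi) t0 = u q t0 * u q t0" by (simp add: u_def per_ph)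
    then obtain q where q: "q \<in> {0..2*pi}" "u q t0 * u q t0 = u p t0 * u p t0"
      using per_reduce[of "\<lambda>q. u q t0 * u q t0" p] by blast
    have "wf q t0 \<le> wf ps ts" using mx[of q t0] q(1) by simp
    moreover have "u q t0 * u q t0 \<le> wf q t0"
      using K0 by (simp add: wf_def)
    ultimately show ?thesis using q(2) wmax by (simp add: u_def)
  qed
  show ?thesis
  proof (intro exI allI)
    fix p t
    have "sqrt (ph n p t * ph n p t) \<le> sqrt W" using main[of p t] by (rule real_sqrt_le_mono)
    then show "\<bar>ph n p t\<bar> \<le> sqrt W" by simp
  qed
qed

lemma all_bounds: assumes "\<exists>B. \<forall>p t. \<bar>phi p t\<bar> \<le> B"
  shows "\<exists>B. \<forall>p t. \<bar>ph n p t\<bar> \<le> B"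
proof (induction n rule: less_induct)
  case (less n)
  show ?case
  proof (cases "n = 0")
    case True then show ?thesis using assms by (simp add: ph_0)
  next
    case False
    have "\<forall>j. \<exists>B. j \<le> n - 1 \<longrightarrow> (\<forall>p t. \<bar>ph j p t\<bar> \<le> B)" using less False by auto
    then obtain Bf where Bf0: "\<forall>j. j \<le> n - 1 \<longrightarrow> (\<forall>p t. \<bar>ph j p t\<bar> \<le> Bf j)"
      using choice[of "\<lambda>j B. j \<le> n - 1 \<longrightarrow> (\<forall>p t. \<bar>ph j p t\<bar> \<le> B)"] by blast
    then have Bf: "\<And>j p t. j \<le> n - 1 \<Longrightarrow> \<bar>ph j p t\<bar> \<le> Bf j" by blast
    define M where "M = Max (Bf ` {..n - 1})"
    have "\<And>j p t. j \<le> n - 1 \<Longrightarrow> \<bar>ph j p t\<bar> \<le> M"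
    proof -
      fix j p t assume j: "j \<le> n - 1"
      have "Bf j \<le> M" unfolding M_def using j by (intro Max_ge) auto
      then show "\<bar>ph j p t\<bar> \<le> M" using Bf[OF j, of p t] by linarith
    qed
    moreover have "n \<ge> 1" using False by simp
    ultimately show ?thesis by (rule bound_step[rotated])
  qed
qed

end



theorem proposition6p2:
  fixes C :: "real \<Rightarrow> real \<Rightarrow> real \<times> real" and lam p0 :: real
  assumes smooth: "smooth_curve_family C"
    and closed: "\<forall>p t. C (p + 2 * pi) t = C p t"
    and nondeg1: "\<forall>p t. det2 (C p t) (dP C p t) \<noteq> 0"
    and nondeg2: "\<forall>p t. det2 (dP C p t) (dP (dP C) p t) \<noteq> 0"
    and pos: "\<forall>p t. det2 (dP C p t) (dP (dP C) p t) / det2 (C p t) (dP C p t) > 0"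
    and flow: "\<forall>p t. dT C p t =
                 (lam + ca_nonlocal C p0 p t) *\<^sub>R C p t + (ca_curv C p t / 2) *\<^sub>R dXi C C p t"
    and bounded: "\<exists>B. \<forall>p t. \<bar>ca_curv C p t\<bar> \<le> B"
  shows "\<forall>n::nat. \<exists>Cn. \<forall>p t. \<bar>ca_curv_deriv C n p t\<bar> \<le> Cn"
proof -
  interpret cflow C lam p0
    by (rule cflow.intro[OF smooth closed nondeg1 nondeg2 pos flow])
  have b: "\<exists>B. \<forall>p t. \<bar>phi p t\<bar> \<le> B" using bounded by (simp add: phi_eq)
  show ?thesis
  proof
    fix n :: nat
    show "\<exists>Cn. \<forall>p t. \<bar>ca_curv_deriv C n p t\<bar> \<le> Cn"
      using all_bounds[OF b, of n] by (simp add: ca_curv_deriv_eq)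
  qed
qed

end
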